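(* Let $d$ be an integer and let $G$ be a finite connected $d$-regular simple graph containing no cycle of length $3$ and no cycle of length $5$ as a subgraph. If $\kappa_{LLY}(x,y)>0$ for every edge $xy$ of $G$, then $\kappa_{LLY}(x,y)=2/d$ for every edge $xy$ of $G$.
   Context: For vertices $u,v$ of a connected graph $G$, $d(u,v)$ is the graph distance, $N(v)$ is the neighborhood of $v$, $d_v=|N(v)|$. For $0\le\alpha<1$, the $\alpha$-lazy random walk is $m_x^\alpha(x)=\alpha$, $m_x^\alpha(v)=(1-\alpha)/d_x$ for $v\in N(x)$, $m_x^\alpha(v)=0$ otherwise. The transportation distance between probability distributions $m_1,m_2$ on $V(G)$ is $W(m_1,m_2)=\inf_A\sum_{x,y}A(x,y)d(x,y)$ over couplings $A:V\times V\to[0,1]$ with $\sum_yA(x,y)=m_1(x)$, $\sum_xA(x,y)=m_2(y)$. For distinct $x,y$, $\kappa_\alpha(x,y)=1-W(m_x^\alpha,m_y^\alpha)/d(x,y)$ and $\kappa_{LLY}(x,y)=\lim_{\alpha\to1}\kappa_\alpha(x,y)/(1-\alpha)$. *)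

theory Defs
  imports "HOL-Analysis.Analysis"
begin

definition simple_graph :: "'a set \<Rightarrow> ('a \<Rightarrow> 'a \<Rightarrow> bool) \<Rightarrow> bool" where
  "simple_graph V E \<longleftrightarrow> finite V \<and> (\<forall>x y. E x y \<longrightarrow> x \<in> V \<and> y \<in> V)
     \<and> (\<forall>x y. E x y \<longrightarrow> E y x) \<and> (\<forall>x. \<not> E x x)"

definition nbrs :: "'a set \<Rightarrow> ('a \<Rightarrow> 'a \<Rightarrow> bool) \<Rightarrow> 'a \<Rightarrow> 'a set" where
  "nbrs V E v = {u \<in> V. E v u}"

definition deg :: "'a set \<Rightarrow> ('a \<Rightarrow> 'a \<Rightarrow> bool) \<Rightarrow> 'a \<Rightarrow> nat" where
  "deg V E v = card (nbrs V E v)"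

definition regular :: "'a set \<Rightarrow> ('a \<Rightarrow> 'a \<Rightarrow> bool) \<Rightarrow> nat \<Rightarrow> bool" where
  "regular V E d \<longleftrightarrow> (\<forall>v\<in>V. deg V E v = d)"

text \<open>A walk of length n from x to y: a list of n+1 vertices with consecutive adjacent.\<close>
definition walk :: "'a set \<Rightarrow> ('a \<Rightarrow> 'a \<Rightarrow> bool) \<Rightarrow> 'a list \<Rightarrow> bool" where
  "walk V E p \<longleftrightarrow> p \<noteq> [] \<and> set p \<subseteq> V \<and> (\<forall>i < length p - 1. E (p ! i) (p ! Suc i))"

definition connected_graph :: "'a set \<Rightarrow> ('a \<Rightarrow> 'a \<Rightarrow> bool) \<Rightarrow> bool" where
  "connected_graph V E \<longleftrightarrow> V \<noteq> {} \<and>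
     (\<forall>x\<in>V. \<forall>y\<in>V. \<exists>p. walk V E p \<and> hd p = x \<and> last p = y)"

definition gdist :: "'a set \<Rightarrow> ('a \<Rightarrow> 'a \<Rightarrow> bool) \<Rightarrow> 'a \<Rightarrow> 'a \<Rightarrow> nat" where
  "gdist V E x y = (LEAST n. \<exists>p. walk V E p \<and> hd p = x \<and> last p = y \<and> length p = Suc n)"

definition has_cycle :: "'a set \<Rightarrow> ('a \<Rightarrow> 'a \<Rightarrow> bool) \<Rightarrow> nat \<Rightarrow> bool" where
  "has_cycle V E k \<longleftrightarrow> (\<exists>c :: nat \<Rightarrow> 'a. inj_on c {..<k} \<and> c ` {..<k} \<subseteq> V \<and>
      (\<forall>i<k. E (c i) (c (Suc i mod k))))"

definition lazy_walk :: "'a set \<Rightarrow> ('a \<Rightarrow> 'a \<Rightarrow> bool) \<Rightarrow> real \<Rightarrow> 'a \<Rightarrow> 'a \<Rightarrow> real" where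
  "lazy_walk V E \<alpha> x v = (if v = x then \<alpha>
      else if v \<in> nbrs V E x then (1 - \<alpha>) / real (deg V E x) else 0)"

definition coupling :: "'a set \<Rightarrow> ('a \<Rightarrow> real) \<Rightarrow> ('a \<Rightarrow> real) \<Rightarrow> ('a \<Rightarrow> 'a \<Rightarrow> real) \<Rightarrow> bool" where
  "coupling V m1 m2 A \<longleftrightarrow> (\<forall>x y. 0 \<le> A x y \<and> A x y \<le> 1)
     \<and> (\<forall>x y. (x \<notin> V \<or> y \<notin> V) \<longrightarrow> A x y = 0)
     \<and> (\<forall>x\<in>V. (\<Sum>y\<in>V. A x y) = m1 x)
     \<and> (\<forall>y\<in>V. (\<Sum>x\<in>V. A x y) = m2 y)"

definition transport :: "'a set \<Rightarrow> ('a \<Rightarrow> 'a \<Rightarrow> bool) \<Rightarrow> ('a \<Rightarrow> real) \<Rightarrow> ('a \<Rightarrow> real) \<Rightarrow> real" where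
  "transport V E m1 m2 = Inf {(\<Sum>x\<in>V. \<Sum>y\<in>V. A x y * real (gdist V E x y)) | A. coupling V m1 m2 A}"

definition kappa_alpha :: "'a set \<Rightarrow> ('a \<Rightarrow> 'a \<Rightarrow> bool) \<Rightarrow> real \<Rightarrow> 'a \<Rightarrow> 'a \<Rightarrow> real" where
  "kappa_alpha V E \<alpha> x y =
     1 - transport V E (lazy_walk V E \<alpha> x) (lazy_walk V E \<alpha> y) / real (gdist V E x y)"

definition kappa_LLY :: "'a set \<Rightarrow> ('a \<Rightarrow> 'a \<Rightarrow> bool) \<Rightarrow> 'a \<Rightarrow> 'a \<Rightarrow> real" where
  "kappa_LLY V E x y = Lim (at_left (1::real)) (\<lambda>\<alpha>. kappa_alpha V E \<alpha> x y / (1 - \<alpha>))"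

end

theory Submission
  imports Defs
begin


lemma sg_facts:
  assumes "simple_graph V E"
  shows "finite V" "E a b \<Longrightarrow> a \<in> V" "E a b \<Longrightarrow> b \<in> V" "E a b \<Longrightarrow> E b a" "\<not> E a a"
  using assms unfolding simple_graph_def by blast+

lemma no_tri:
  assumes "simple_graph V E" "\<not> has_cycle V E 3" "E a b" "E b c" "E c a"
  shows False
proof -
  have d: "a \<noteq> b" "b \<noteq> c" "c \<noteq> a" using assms(1,3-5) sg_facts(5) by metis+
  have V: "a \<in> V" "b \<in> V" "c \<in> V" using assms(1,3-5) sg_facts(2) by metis+
  let ?c = "\<lambda>i::nat. [a,b,c] ! i"
  have "has_cycle V E 3"
    unfolding has_cycle_def
    apply (rule exI[of _ ?c])
  proof (intro conjI)
    have e: "{..<3::nat} = {0,1,2}" by auto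
    show "inj_on ?c {..<3}" unfolding e using d by (auto simp: inj_on_def)
    show "?c ` {..<3} \<subseteq> V" unfolding e using V by auto
    show "\<forall>i<3. E (?c i) (?c (Suc i mod 3))"
    proof (intro allI impI)
      fix i :: nat assume "i < 3"
      then have "i = 0 \<or> i = 1 \<or> i = 2" by arith
      then show "E (?c i) (?c (Suc i mod 3))" using assms(3-5) by auto
    qed
  qed
  with assms(2) show False by blast
qed

lemma no_pent:
  assumes "simple_graph V E" "\<not> has_cycle V E 5" "E a b" "E b c" "E c d" "E d e" "E e a"
    "distinct [a,b,c,d,e]"
  shows False
proof -
  have V: "a \<in> V" "b \<in> V" "c \<in> V" "d \<in> V" "e \<in> V" using assms(1,3-7) sg_facts(2) by metis+
  let ?c = "\<lambda>i::nat. [a,b,c,d,e] ! i"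
  have "has_cycle V E 5"
    unfolding has_cycle_def
    apply (rule exI[of _ ?c])
  proof (intro conjI)
    have e: "{..<5::nat} = {0,1,2,3,4}" by auto
    show "inj_on ?c {..<5}" unfolding e using assms(8) by (auto simp: inj_on_def)
    show "?c ` {..<5} \<subseteq> V" unfolding e using V by auto
    show "\<forall>i<5. E (?c i) (?c (Suc i mod 5))"
    proof (intro allI impI)
      fix i :: nat assume "i < 5"
      then have "i = 0 \<or> i = 1 \<or> i = 2 \<or> i = 3 \<or> i = 4" by arith
      then show "E (?c i) (?c (Suc i mod 5))" using assms(3-7) by auto
    qed
  qed
  with assms(2) show False by blast
qed


lemma walk_ex:
  assumes "connected_graph V E" "a \<in> V" "b \<in> V"
  shows "\<exists>n p. walk V E p \<and> hd p = a \<and> last p = b \<and> length p = Suc n"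
proof -
  obtain p where "walk V E p" "hd p = a" "last p = b" using assms unfolding connected_graph_def by blast
  moreover then have "length p = Suc (length p - 1)" unfolding walk_def by (cases p) auto
  ultimately show ?thesis by blast
qed

lemma gdist_le:
  assumes "walk V E p" "hd p = a" "last p = b" "length p = Suc n"
  shows "gdist V E a b \<le> n"
  unfolding gdist_def using assms by (intro Least_le) blast

lemma gdist_ge:
  assumes "connected_graph V E" "a \<in> V" "b \<in> V"
    and "\<And>n p. n < k \<Longrightarrow> walk V E p \<Longrightarrow> hd p = a \<Longrightarrow> last p = b \<Longrightarrow> length p = Suc n \<Longrightarrow> False"
  shows "k \<le> gdist V E a b"
proof -
  from walk_ex[OF assms(1-3)] obtain n p where "walk V E p \<and> hd p = a \<and> last p = b \<and> length p = Suc n" by blast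
  then have "\<exists>p. walk V E p \<and> hd p = a \<and> last p = b \<and> length p = Suc (gdist V E a b)"
    unfolding gdist_def by (rule LeastI[where P = "\<lambda>n. \<exists>p. walk V E p \<and> hd p = a \<and> last p = b \<and> length p = Suc n", OF exI])
  then obtain p where "walk V E p" "hd p = a" "last p = b" "length p = Suc (gdist V E a b)" by blast
  with assms(4)[of "gdist V E a b" p] show ?thesis by force
qed

lemma walk_short:
  assumes "walk V E p" "hd p = a" "last p = b"
  shows "length p = 1 \<Longrightarrow> a = b"
    and "length p = 2 \<Longrightarrow> E a b"
    and "length p = 3 \<Longrightarrow> \<exists>w. E a w \<and> E w b"
proof -
  show "length p = 1 \<Longrightarrow> a = b" using assms by (cases p) auto
  show "length p = 2 \<Longrightarrow> E a b"
  proof -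
    assume "length p = 2"
    then obtain u v where p: "p = [u,v]" by (auto simp: numeral_2_eq_2 length_Suc_conv)
    show ?thesis using assms unfolding p walk_def by auto
  qed
  show "length p = 3 \<Longrightarrow> \<exists>w. E a w \<and> E w b"
  proof -
    assume "length p = 3"
    then obtain u v w where p: "p = [u,v,w]" by (auto simp: numeral_3_eq_3 length_Suc_conv)
    have "E (p!0) (p!1)" "E (p!1) (p!2)" using assms(1) unfolding walk_def p by auto
    then show ?thesis using assms unfolding p by auto
  qed
qed

lemma gdist_refl: "a \<in> V \<Longrightarrow> gdist V E a a = 0"
  using gdist_le[of V E "[a]" a a 0] by (auto simp: walk_def)

lemma gdist_edge1: "E a b \<Longrightarrow> simple_graph V E \<Longrightarrow> gdist V E a b \<le> 1"
  using gdist_le[of V E "[a,b]" a b 1] sg_facts(2,3)[of V E a b] by (auto simp: walk_def)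

lemma gdist_ge1:
  assumes "connected_graph V E" "a \<in> V" "b \<in> V" "a \<noteq> b"
  shows "1 \<le> gdist V E a b"
proof (rule gdist_ge[OF assms(1-3)])
  fix n p assume "n < 1" "walk V E p" "hd p = a" "last p = b" "length p = Suc n"
  then have "length p = 1" by auto
  then show False using walk_short[OF \<open>walk V E p\<close> \<open>hd p = a\<close> \<open>last p = b\<close>] assms by auto
qed

lemma gdist_edge: "E a b \<Longrightarrow> simple_graph V E \<Longrightarrow> connected_graph V E \<Longrightarrow> gdist V E a b = 1"
  using gdist_edge1[of E a b V] gdist_ge1[of V E a b] sg_facts(2,3)[of V E a b] sg_facts(5)[of V E a] by force

lemma gdist_ge2:
  assumes "connected_graph V E" "a \<in> V" "b \<in> V" "a \<noteq> b" "\<not> E a b"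
  shows "2 \<le> gdist V E a b"
proof (rule gdist_ge[OF assms(1-3)])
  fix n p assume "n < 2" "walk V E p" "hd p = a" "last p = b" "length p = Suc n"
  then have "length p = 1 \<or> length p = 2" by auto
  then show False using walk_short[OF \<open>walk V E p\<close> \<open>hd p = a\<close> \<open>last p = b\<close>] assms by auto
qed

lemma gdist_ge3:
  assumes "connected_graph V E" "a \<in> V" "b \<in> V" "a \<noteq> b" "\<not> E a b" "\<not> (\<exists>w. E a w \<and> E w b)"
  shows "3 \<le> gdist V E a b"
proof (rule gdist_ge[OF assms(1-3)])
  fix n p assume "n < 3" "walk V E p" "hd p = a" "last p = b" "length p = Suc n"
  then have "length p = 1 \<or> length p = 2 \<or> length p = 3" by auto
  then show False using walk_short[OF \<open>walk V E p\<close> \<open>hd p = a\<close> \<open>last p = b\<close>] assms by auto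
qed


definition tcost :: "'a set \<Rightarrow> ('a \<Rightarrow> 'a \<Rightarrow> bool) \<Rightarrow> ('a \<Rightarrow> 'a \<Rightarrow> real) \<Rightarrow> real" where
  "tcost V E A = (\<Sum>x\<in>V. \<Sum>y\<in>V. A x y * real (gdist V E x y))"

lemma tcost_nonneg: "coupling V m1 m2 A \<Longrightarrow> 0 \<le> tcost V E A"
  unfolding tcost_def coupling_def by (intro sum_nonneg) auto

lemma transport_le:
  assumes "coupling V m1 m2 A"
  shows "transport V E m1 m2 \<le> tcost V E A"
  unfolding transport_def
proof (rule cInf_lower)
  show "tcost V E A \<in> {(\<Sum>x\<in>V. \<Sum>y\<in>V. A x y * real (gdist V E x y)) | A. coupling V m1 m2 A}"
    using assms unfolding tcost_def by blast
  show "bdd_below {(\<Sum>x\<in>V. \<Sum>y\<in>V. A x y * real (gdist V E x y)) | A. coupling V m1 m2 A}"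
    by (rule bdd_belowI[of _ 0]) (use tcost_nonneg[unfolded tcost_def] in blast)
qed

lemma transport_ge:
  assumes "coupling V m1 m2 A0" "\<And>A. coupling V m1 m2 A \<Longrightarrow> c \<le> tcost V E A"
  shows "c \<le> transport V E m1 m2"
  unfolding transport_def
  by (rule cInf_greatest) (use assms in \<open>auto simp: tcost_def\<close>)

lemma dual_bound:
  assumes "finite V" "coupling V m1 m2 A"
    and lip: "\<And>a b. a \<in> V \<Longrightarrow> b \<in> V \<Longrightarrow> m1 a \<noteq> 0 \<Longrightarrow> m2 b \<noteq> 0 \<Longrightarrow> f a - f b \<le> real (gdist V E a b)"
  shows "(\<Sum>a\<in>V. f a * m1 a) - (\<Sum>b\<in>V. f b * m2 b) \<le> tcost V E A"
proof -
  have A0: "\<And>a b. 0 \<le> A a b" and r: "\<And>a. a \<in> V \<Longrightarrow> (\<Sum>b\<in>V. A a b) = m1 a"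
    and c: "\<And>b. b \<in> V \<Longrightarrow> (\<Sum>a\<in>V. A a b) = m2 b" using assms(2) unfolding coupling_def by auto
  have s1: "(\<Sum>a\<in>V. f a * m1 a) = (\<Sum>a\<in>V. \<Sum>b\<in>V. f a * A a b)"
    by (rule sum.cong) (auto simp: r[symmetric] sum_distrib_left)
  have s2: "(\<Sum>b\<in>V. f b * m2 b) = (\<Sum>a\<in>V. \<Sum>b\<in>V. f b * A a b)"
    by (subst sum.swap) (rule sum.cong, auto simp: c[symmetric] sum_distrib_left)
  have "(\<Sum>a\<in>V. f a * m1 a) - (\<Sum>b\<in>V. f b * m2 b) = (\<Sum>a\<in>V. \<Sum>b\<in>V. (f a - f b) * A a b)"
    unfolding s1 s2 by (simp add: sum_subtractf left_diff_distrib)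
  also have "\<dots> \<le> tcost V E A"
    unfolding tcost_def
  proof (intro sum_mono)
    fix a b assume ab: "a \<in> V" "b \<in> V"
    show "(f a - f b) * A a b \<le> A a b * real (gdist V E a b)"
    proof (cases "A a b = 0")
      case False
      then have pos: "0 < A a b" using A0[of a b] by auto
      have "A a b \<le> m1 a" unfolding r[OF ab(1), symmetric]
        by (rule member_le_sum) (use A0 ab assms(1) in auto)
      moreover have "A a b \<le> m2 b" unfolding c[OF ab(2), symmetric]
        by (rule member_le_sum) (use A0 ab assms(1) in auto)
      ultimately have "f a - f b \<le> real (gdist V E a b)" using lip[OF ab] pos by auto
      then show ?thesis using pos by (simp add: mult.commute mult_left_mono)
    qed simp
  qed
  finally show ?thesis .
qed

lemma sum_lazy:
  assumes "simple_graph V E" "x \<in> V"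
  shows "(\<Sum>a\<in>V. f a * lazy_walk V E \<alpha> x a) = \<alpha> * f x + (1-\<alpha>)/real (deg V E x) * (\<Sum>a\<in>nbrs V E x. f a)"
proof -
  have xn: "x \<notin> nbrs V E x" using assms(1) sg_facts(5) unfolding nbrs_def by fastforce
  have sub: "nbrs V E x \<subseteq> V" unfolding nbrs_def by auto
  have fin: "finite V" using assms(1) sg_facts(1) by blast
  have "(\<Sum>a\<in>V. f a * lazy_walk V E \<alpha> x a) = (\<Sum>a\<in>V. (if a = x then \<alpha> * f x else 0)
      + (if a \<in> nbrs V E x then (1-\<alpha>)/real (deg V E x) * f a else 0))"
    by (rule sum.cong) (use xn in \<open>auto simp: lazy_walk_def\<close>)
  also have "\<dots> = \<alpha> * f x + (\<Sum>a\<in>nbrs V E x. (1-\<alpha>)/real (deg V E x) * f a)"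
    using assms(2) fin sub by (simp add: sum.distrib sum.If_cases Int_absorb1)
  finally show ?thesis by (simp add: sum_distrib_left)
qed

lemma lazy_basic:
  assumes "simple_graph V E" "x \<in> V" "0 \<le> \<alpha>" "\<alpha> \<le> 1" "nbrs V E x \<noteq> {}"
  shows "\<And>v. 0 \<le> lazy_walk V E \<alpha> x v" "\<And>v. lazy_walk V E \<alpha> x v \<le> 1"
    "(\<Sum>v\<in>V. lazy_walk V E \<alpha> x v) = 1"
proof -
  have fin: "finite (nbrs V E x)" using sg_facts(1)[OF assms(1)] unfolding nbrs_def by auto
  then have dpos: "1 \<le> real (deg V E x)" using assms(5) unfolding deg_def
    by (simp add: Suc_leI card_gt_0_iff)
  show "\<And>v. 0 \<le> lazy_walk V E \<alpha> x v" using assms dpos by (auto simp: lazy_walk_def)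
  show "\<And>v. lazy_walk V E \<alpha> x v \<le> 1" using assms dpos by (auto simp: lazy_walk_def divide_le_eq)
  show "(\<Sum>v\<in>V. lazy_walk V E \<alpha> x v) = 1"
    using sum_lazy[OF assms(1,2), of "\<lambda>_. 1" \<alpha>] dpos by (simp add: deg_def)
qed

lemma prod_coupling:
  assumes "finite V" "\<And>v. 0 \<le> m1 v" "\<And>v. m1 v \<le> 1" "\<And>v. 0 \<le> m2 v" "\<And>v. m2 v \<le> 1"
    "(\<Sum>v\<in>V. m1 v) = 1" "(\<Sum>v\<in>V. m2 v) = 1"
  shows "coupling V m1 m2 (\<lambda>a b. if a \<in> V \<and> b \<in> V then m1 a * m2 b else 0)"
  unfolding coupling_def
  using assms by (auto simp: mult_le_one sum_distrib_left[symmetric] sum_distrib_right[symmetric])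


lemma hall:
  fixes U :: "'a set" and N :: "'a \<Rightarrow> 'b set"
  assumes "finite U" "\<And>u. u \<in> U \<Longrightarrow> finite (N u)"
    and "\<And>S. S \<subseteq> U \<Longrightarrow> card S \<le> card (\<Union>(N ` S))"
  shows "\<exists>f. inj_on f U \<and> (\<forall>u\<in>U. f u \<in> N u)"
  using assms
proof (induction "card U" arbitrary: U N rule: less_induct)
  case less
  note fin = less.prems(1) and finN = less.prems(2) and H = less.prems(3)
  have finU: "\<And>S. S \<subseteq> U \<Longrightarrow> finite (\<Union>(N ` S))"
    using fin finN by (meson finite_UN_I finite_subset subsetD)
  show ?case
  proof (cases "U = {}")
    case True then show ?thesis by auto
  next
    case Une: False
    show ?thesis
    proof (cases "\<forall>S. S \<subseteq> U \<and> S \<noteq> {} \<and> S \<noteq> U \<longrightarrow> card S < card (\<Union>(N ` S))")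
      case True
      obtain u0 where u0: "u0 \<in> U" using Une by blast
      have "card {u0} \<le> card (N u0)" using H[of "{u0}"] u0 by auto
      then have "N u0 \<noteq> {}" by auto
      then obtain v0 where v0: "v0 \<in> N u0" by blast
      define U' where "U' = U - {u0}"
      define N' where "N' = (\<lambda>u. N u - {v0})"
      have lt: "card U' < card U" unfolding U'_def using fin u0 by (intro psubset_card_mono) auto
      have "\<exists>f. inj_on f U' \<and> (\<forall>u\<in>U'. f u \<in> N' u)"
      proof (rule less.hyps[OF lt])
        show "finite U'" unfolding U'_def using fin by auto
        show "\<And>u. u \<in> U' \<Longrightarrow> finite (N' u)" unfolding U'_def N'_def using finN by auto
        fix S assume S: "S \<subseteq> U'"
        show "card S \<le> card (\<Union>(N' ` S))"
        proof (cases "S = {}")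
          case False
          have "S \<subseteq> U" "S \<noteq> U" using S u0 unfolding U'_def by auto
          then have a: "card S < card (\<Union>(N ` S))" using True False by blast
          have eq: "\<Union>(N' ` S) = \<Union>(N ` S) - {v0}" unfolding N'_def by auto
          have c: "card (\<Union>(N ` S)) - 1 \<le> card (\<Union>(N ` S) - {v0})"
            by (simp add: card_Diff_singleton_if)
          show ?thesis unfolding eq using a c by linarith
        qed simp
      qed
      then obtain f where f: "inj_on f U'" "\<forall>u\<in>U'. f u \<in> N' u" by blast
      define g where "g = f(u0 := v0)"
      have "inj_on g U"
      proof -
        have "U = insert u0 U'" unfolding U'_def using u0 by auto
        moreover have "inj_on g U'" using f(1) unfolding g_def U'_def inj_on_def by auto
        moreover have "g u0 \<notin> g ` U'" using f(2) unfolding g_def U'_def N'_def by auto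
        moreover have "u0 \<notin> U'" unfolding U'_def by auto
        ultimately show ?thesis by simp
      qed
      moreover have "\<forall>u\<in>U. g u \<in> N u" using f(2) v0 unfolding g_def U'_def N'_def by auto
      ultimately show ?thesis by blast
    next
      case False
      then obtain S0 where S0: "S0 \<subseteq> U" "S0 \<noteq> {}" "S0 \<noteq> U" "card (\<Union>(N ` S0)) \<le> card S0"
        by (auto simp: not_less)
      have fS0: "finite S0" using S0(1) fin finite_subset by blast
      have lt1: "card S0 < card U" using S0 fin by (simp add: psubset_card_mono psubsetI)
      have "\<exists>f. inj_on f S0 \<and> (\<forall>u\<in>S0. f u \<in> N u)"
        by (rule less.hyps[OF lt1]) (use fS0 finN H S0(1) in auto)
      then obtain f1 where f1: "inj_on f1 S0" "\<forall>u\<in>S0. f1 u \<in> N u" by blast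
      define U2 where "U2 = U - S0"
      define N2 where "N2 = (\<lambda>u. N u - \<Union>(N ` S0))"
      have lt2: "card U2 < card U" unfolding U2_def using S0 fin
        by (intro psubset_card_mono) auto
      have "\<exists>f. inj_on f U2 \<and> (\<forall>u\<in>U2. f u \<in> N2 u)"
      proof (rule less.hyps[OF lt2])
        show "finite U2" unfolding U2_def using fin by auto
        show "\<And>u. u \<in> U2 \<Longrightarrow> finite (N2 u)" unfolding U2_def N2_def using finN by auto
        fix S assume S: "S \<subseteq> U2"
        have SU: "S \<union> S0 \<subseteq> U" using S S0 unfolding U2_def by auto
        have disj: "S \<inter> S0 = {}" using S unfolding U2_def by auto
        have fS: "finite S" using S fin unfolding U2_def using finite_subset by blast
        have e: "\<Union>(N2 ` S) = \<Union>(N ` (S \<union> S0)) - \<Union>(N ` S0)" unfolding N2_def by auto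
        have sub: "\<Union>(N ` S0) \<subseteq> \<Union>(N ` (S \<union> S0))" by auto
        have "card (\<Union>(N2 ` S)) = card (\<Union>(N ` (S \<union> S0))) - card (\<Union>(N ` S0))"
          unfolding e by (rule card_Diff_subset) (use finU S0(1) sub finite_subset in auto)
        moreover have "card (S \<union> S0) = card S + card S0" using disj fS fS0 by (simp add: card_Un_disjoint)
        moreover have "card (S \<union> S0) \<le> card (\<Union>(N ` (S \<union> S0)))" using H[OF SU] .
        ultimately show "card S \<le> card (\<Union>(N2 ` S))" using S0(4) by linarith
      qed
      then obtain f2 where f2: "inj_on f2 U2" "\<forall>u\<in>U2. f2 u \<in> N2 u" by blast
      define g where "g = (\<lambda>u. if u \<in> S0 then f1 u else f2 u)"
      have "inj_on g U"
        unfolding inj_on_def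
      proof (intro ballI impI)
        fix a b assume ab: "a \<in> U" "b \<in> U" "g a = g b"
        show "a = b"
        proof (cases "a \<in> S0"; cases "b \<in> S0")
          assume "a \<in> S0" "b \<in> S0" then show ?thesis using ab f1(1) unfolding g_def inj_on_def by auto
        next
          assume "a \<notin> S0" "b \<notin> S0" then show ?thesis using ab f2(1) unfolding g_def inj_on_def U2_def by auto
        next
          assume "a \<in> S0" "b \<notin> S0" then show ?thesis using ab f1(2) f2(2) unfolding g_def U2_def N2_def by force
        next
          assume h: "a \<notin> S0" "b \<in> S0"
          then have "f2 a \<notin> \<Union>(N ` S0)" using ab f2(2) unfolding U2_def N2_def by auto
          moreover have "f1 b \<in> \<Union>(N ` S0)" using h f1(2) by auto
          moreover have "f2 a = f1 b" using ab h unfolding g_def by auto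
          ultimately show ?thesis by auto
        qed
      qed
      moreover have "\<forall>u\<in>U. g u \<in> N u" using f1(2) f2(2) unfolding g_def U2_def N2_def by auto
      ultimately show ?thesis by blast
    qed
  qed
qed


locale edge =
  fixes V :: "'a set" and E and d :: nat and x y :: 'a
  assumes sg: "simple_graph V E" and cg: "connected_graph V E" and reg: "regular V E d"
    and no3: "\<not> has_cycle V E 3" and no5: "\<not> has_cycle V E 5" and xy: "E x y"

context edge
begin

abbreviation "UU \<equiv> nbrs V E x - {y}"
abbreviation "WW \<equiv> nbrs V E y - {x}"

lemma basic:
  shows "x \<in> V" "y \<in> V" "x \<noteq> y" "deg V E x = d" "deg V E y = d" "1 \<le> d"
    "nbrs V E x = insert y UU" "nbrs V E y = insert x WW" "y \<notin> UU" "x \<notin> WW"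
    "x \<notin> UU" "y \<notin> WW" "UU \<inter> WW = {}" "UU \<subseteq> V" "WW \<subseteq> V" "finite UU" "finite WW"
    "card UU = d - 1" "card WW = d - 1" "finite V"
proof -
  show xV: "x \<in> V" and yV: "y \<in> V" using sg xy sg_facts by metis+
  show "x \<noteq> y" using sg xy sg_facts(5) by metis
  show dx: "deg V E x = d" "deg V E y = d" using reg xV yV unfolding regular_def by auto
  show fV: "finite V" using sg sg_facts(1) by blast
  have yx: "E y x" using sg xy sg_facts(4) by metis
  show nx: "nbrs V E x = insert y UU" using xy yV unfolding nbrs_def by auto
  show ny: "nbrs V E y = insert x WW" using yx xV unfolding nbrs_def by auto
  show "y \<notin> UU" "x \<notin> WW" by auto
  show "x \<notin> UU" "y \<notin> WW" using sg sg_facts(5) unfolding nbrs_def by fastforce+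
  show "UU \<inter> WW = {}"
  proof (rule ccontr)
    assume "UU \<inter> WW \<noteq> {}"
    then obtain w where "E x w" "E y w" unfolding nbrs_def by auto
    then show False using no_tri[OF sg no3, of x y w] xy sg sg_facts(4) by metis
  qed
  show "UU \<subseteq> V" "WW \<subseteq> V" unfolding nbrs_def by auto
  show fU: "finite UU" "finite WW" using fV unfolding nbrs_def by auto
  have yin: "y \<in> nbrs V E x" using xy yV unfolding nbrs_def by auto
  have xin: "x \<in> nbrs V E y" using yx xV unfolding nbrs_def by auto
  have "card (nbrs V E x) = d" using dx unfolding deg_def by auto
  then show "card UU = d - 1" using yin by (simp add: card_Diff_singleton)
  have "card (nbrs V E y) = d" using dx unfolding deg_def by auto
  then show "card WW = d - 1" using xin by (simp add: card_Diff_singleton)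
  have "y \<in> nbrs V E x" using nx by auto
  then have "card (nbrs V E x) \<noteq> 0" using fV unfolding nbrs_def by auto
  then show "1 \<le> d" using dx unfolding deg_def by auto
qed

lemma U_facts: "u \<in> UU \<Longrightarrow> E x u \<and> \<not> E u y \<and> u \<noteq> x \<and> u \<noteq> y \<and> u \<in> V"
proof -
  assume u: "u \<in> UU"
  then have xu: "E x u" "u \<in> V" "u \<noteq> y" unfolding nbrs_def by auto
  have yx: "E y x" using sg_facts(4)[OF sg xy] .
  have "\<not> E u y" using no_tri[OF sg no3, of x u y] xu(1) yx by blast
  moreover have "u \<noteq> x" using xu(1) sg_facts(5)[OF sg, of x] by blast
  ultimately show ?thesis using xu by blast
qed

lemma W_facts: "v \<in> WW \<Longrightarrow> E y v \<and> \<not> E x v \<and> v \<noteq> x \<and> v \<noteq> y \<and> v \<in> V"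
proof -
  assume v: "v \<in> WW"
  then have yv: "E y v" "v \<in> V" "v \<noteq> x" unfolding nbrs_def by auto
  have yx: "E y x" using sg_facts(4)[OF sg xy] .
  have "\<not> E x v"
  proof
    assume "E x v"
    then have "E v x" using sg_facts(4)[OF sg] by blast
    then show False using no_tri[OF sg no3, of x y v] yv(1) xy by blast
  qed
  moreover have "v \<noteq> y" using yv(1) sg_facts(5)[OF sg, of y] by blast
  ultimately show ?thesis using yv by blast
qed

lemma gd1: "a \<in> V \<Longrightarrow> b \<in> V \<Longrightarrow> a \<noteq> b \<Longrightarrow> 1 \<le> real (gdist V E a b)"
  using gdist_ge1[OF cg] by fastforce

lemma gdxy: "gdist V E x y = 1" using gdist_edge[OF xy sg cg] .

lemma gduy: "u \<in> UU \<Longrightarrow> 2 \<le> real (gdist V E u y)"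
  using gdist_ge2[OF cg, of u y] U_facts basic(2) by fastforce

lemma gdxv: "v \<in> WW \<Longrightarrow> 2 \<le> real (gdist V E x v)"
  using gdist_ge2[OF cg, of x v] W_facts basic(1) by fastforce

lemma gduv: 
  assumes "u \<in> UU" "v \<in> WW" "\<not> E u v"
  shows "3 \<le> real (gdist V E u v)"
proof -
  have uv: "u \<noteq> v" using assms(1,2) basic(13) by auto
  have "\<not> (\<exists>w. E u w \<and> E w v)"
  proof
    assume "\<exists>w. E u w \<and> E w v"
    then obtain w where w: "E u w" "E w v" by blast
    have u: "E x u" "\<not> E u y" "u \<noteq> x" "u \<noteq> y" using U_facts[OF assms(1)] by auto
    have v: "E y v" "\<not> E x v" "v \<noteq> x" "v \<noteq> y" using W_facts[OF assms(2)] by auto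
    have "w \<noteq> x" using w v by auto
    moreover have "w \<noteq> y" using w u by auto
    moreover have "w \<noteq> u" "w \<noteq> v" using w sg sg_facts(5) by metis+
    ultimately have "distinct [x,u,w,v,y]" using u v uv basic(3) by auto
    moreover have "E v y" "E y x" using v xy sg sg_facts(4) by metis+
    ultimately show False using no_pent[OF sg no5, of x u w v y] u w by blast
  qed
  moreover have "u \<in> V" "v \<in> V" using U_facts[OF assms(1)] W_facts[OF assms(2)] by auto
  ultimately have "3 \<le> gdist V E u v" using gdist_ge3[OF cg, of u v] uv assms(3) by blast
  then show ?thesis by simp
qed

lemma supp_x: "lazy_walk V E \<alpha> x a \<noteq> 0 \<Longrightarrow> a = x \<or> a = y \<or> a \<in> UU"
  unfolding lazy_walk_def by (cases "a = x"; cases "a = y"; cases "a \<in> nbrs V E x") auto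

lemma supp_y: "lazy_walk V E \<alpha> y a \<noteq> 0 \<Longrightarrow> a = x \<or> a = y \<or> a \<in> WW"
  unfolding lazy_walk_def by (cases "a = x"; cases "a = y"; cases "a \<in> nbrs V E y") auto

lemma ex_coupling:
  assumes "0 \<le> \<alpha>" "\<alpha> \<le> 1"
  shows "\<exists>A. coupling V (lazy_walk V E \<alpha> x) (lazy_walk V E \<alpha> y) A"
proof -
  have "nbrs V E x \<noteq> {}" "nbrs V E y \<noteq> {}" using basic(7,8) by auto
  note lx = lazy_basic[OF sg basic(1) assms this(1)] and ly = lazy_basic[OF sg basic(2) assms this(2)]
  show ?thesis
  proof
    show "coupling V (lazy_walk V E \<alpha> x) (lazy_walk V E \<alpha> y)
       (\<lambda>a b. if a \<in> V \<and> b \<in> V then lazy_walk V E \<alpha> x a * lazy_walk V E \<alpha> y b else 0)"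
      by (rule prod_coupling[OF basic(20) lx(1) lx(2) ly(1) ly(2) lx(3) ly(3)])
  qed
qed

lemma lowerA:
  assumes "0 \<le> \<alpha>" "\<alpha> \<le> 1"
  shows "1 - 2 * (1 - \<alpha>) / real d \<le> transport V E (lazy_walk V E \<alpha> x) (lazy_walk V E \<alpha> y)"
proof -
  obtain A0 where A0: "coupling V (lazy_walk V E \<alpha> x) (lazy_walk V E \<alpha> y) A0" using ex_coupling[OF assms] by blast
  define f where "f = (\<lambda>z. if z = x then 1 else if z = y then 0 else if z \<in> UU then 2 else (1::real))"
  have s1: "(\<Sum>a\<in>V. f a * lazy_walk V E \<alpha> x a) = \<alpha> + (1-\<alpha>)/real d * (2 * (real d - 1))"
  proof -
    have "(\<Sum>a\<in>nbrs V E x. f a) = (\<Sum>a\<in>insert y UU. f a)" by (simp only: basic(7)[symmetric])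
    also have "\<dots> = f y + (\<Sum>a\<in>UU. f a)" by (rule sum.insert[OF basic(16) basic(9)])
    also have "(\<Sum>a\<in>UU. f a) = (\<Sum>a\<in>UU. 2)" by (rule sum.cong) (use U_facts in \<open>auto simp: f_def\<close>)
    finally have "(\<Sum>a\<in>nbrs V E x. f a) = 2 * (real d - 1)"
      using basic(18,6) basic(3) by (simp add: f_def of_nat_diff)
    then show ?thesis by (simp add: sum_lazy[OF sg basic(1)] basic(4) f_def)
  qed
  have s2: "(\<Sum>a\<in>V. f a * lazy_walk V E \<alpha> y a) = (1-\<alpha>)/real d * real d"
  proof -
    have "(\<Sum>a\<in>nbrs V E y. f a) = (\<Sum>a\<in>insert x WW. f a)" by (simp only: basic(8)[symmetric])
    also have "\<dots> = f x + (\<Sum>a\<in>WW. f a)" by (rule sum.insert[OF basic(17) basic(10)])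
    also have "(\<Sum>a\<in>WW. f a) = (\<Sum>a\<in>WW. 1)" by (rule sum.cong) (use W_facts basic(13) in \<open>auto simp: f_def\<close>)
    finally have "(\<Sum>a\<in>nbrs V E y. f a) = real d"
      using basic(19,6) by (simp add: f_def of_nat_diff)
    then show ?thesis using basic(3) by (simp add: sum_lazy[OF sg basic(2)] basic(5) f_def)
  qed
  have "1 - 2 * (1 - \<alpha>) / real d = (\<Sum>a\<in>V. f a * lazy_walk V E \<alpha> x a) - (\<Sum>a\<in>V. f a * lazy_walk V E \<alpha> y a)"
    unfolding s1 s2 using basic(6) by (simp add: field_simps)
  also have "\<dots> \<le> transport V E (lazy_walk V E \<alpha> x) (lazy_walk V E \<alpha> y)"
  proof (rule transport_ge[OF A0])
    fix A assume A: "coupling V (lazy_walk V E \<alpha> x) (lazy_walk V E \<alpha> y) A"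
    show "(\<Sum>a\<in>V. f a * lazy_walk V E \<alpha> x a) - (\<Sum>a\<in>V. f a * lazy_walk V E \<alpha> y a) \<le> tcost V E A"
    proof (rule dual_bound[OF basic(20) A])
      fix a b assume ab: "a \<in> V" "b \<in> V" "lazy_walk V E \<alpha> x a \<noteq> 0" "lazy_walk V E \<alpha> y b \<noteq> 0"
      have a: "a = x \<or> a = y \<or> a \<in> UU" using supp_x[OF ab(3)] .
      have b: "b = x \<or> b = y \<or> b \<in> WW" using supp_y[OF ab(4)] .
      have g0: "0 \<le> real (gdist V E a b)" by simp
      show "f a - f b \<le> real (gdist V E a b)"
        using a b
      proof (elim disjE)
        assume "a = x" "b = x" then show ?thesis by (simp add: f_def)
      next
        assume "a = x" "b = y" then show ?thesis using basic(3) gdxy by (simp add: f_def)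
      next
        assume h: "a = x" "b \<in> WW"
        then have "f b = 1" using W_facts[OF h(2)] unfolding f_def nbrs_def by auto
        then show ?thesis using h g0 by (simp add: f_def)
      next
        assume "a = y" "b = x" then show ?thesis using basic(3) by (simp add: f_def)
      next
        assume "a = y" "b = y" then show ?thesis using basic(3) by (simp add: f_def)
      next
        assume h: "a = y" "b \<in> WW"
        then have "f b = 1" using W_facts[OF h(2)] unfolding f_def nbrs_def by auto
        then show ?thesis using h g0 basic(3) by (simp add: f_def)
      next
        assume h: "a \<in> UU" "b = x"
        then have "f a = 2" using U_facts[OF h(1)] unfolding f_def by auto
        then show ?thesis using h gd1[of a x] U_facts[OF h(1)] basic(1) by (simp add: f_def)
      next
        assume h: "a \<in> UU" "b = y"
        then have "f a = 2" using U_facts[OF h(1)] unfolding f_def by auto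
        then show ?thesis using h gduy[of a] basic(3) by (simp add: f_def)
      next
        assume h: "a \<in> UU" "b \<in> WW"
        then have "f a = 2" using U_facts[OF h(1)] unfolding f_def by auto
        moreover have "f b = 1" using W_facts[OF h(2)] unfolding f_def nbrs_def by auto
        moreover have "a \<noteq> b" using h basic(13) by auto
        ultimately show ?thesis using gd1[of a b] ab(1,2) by simp
      qed
    qed
  qed
  finally show ?thesis .
qed

end


context edge
begin

lemma lowerB:
  assumes "0 \<le> \<alpha>" "\<alpha> \<le> 1" and S: "S \<subseteq> UU"
    and card: "card {v \<in> WW. \<exists>u\<in>S. E u v} < card S"
  shows "1 \<le> transport V E (lazy_walk V E \<alpha> x) (lazy_walk V E \<alpha> y)"
proof -
  define T where "T = {v \<in> WW. \<exists>u\<in>S. E u v}"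
  have TW: "T \<subseteq> WW" unfolding T_def by auto
  have fT0: "finite T" using TW basic(17) finite_subset by blast
  have fS0: "finite S" using S basic(16) finite_subset by blast
  have cTS: "card T + 1 \<le> card S" using card unfolding T_def by simp
  obtain A0 where A0: "coupling V (lazy_walk V E \<alpha> x) (lazy_walk V E \<alpha> y) A0" using ex_coupling[OF assms(1,2)] by blast
  define f where "f = (\<lambda>z. if z = x then 1 else if z = y then 0 else if z \<in> S then 2 else if z \<in> UU then 0
     else if z \<in> T then 1 else (-1::real))"
  have fx: "f x = 1" and fy: "f y = 0" using basic(3) unfolding f_def by auto
  have fS: "f a = 2" if "a \<in> S" for a using that S U_facts unfolding f_def by auto
  have fU: "f a = 0" if "a \<in> UU - S" for a using that U_facts unfolding f_def by auto
  have fT: "f b = 1" if "b \<in> T" for b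
  proof -
    have "b \<in> WW" using that TW by auto
    then show ?thesis using that W_facts[of b] basic(13) S unfolding f_def by auto
  qed
  have fN: "f b = -1" if "b \<in> WW - T" for b
  proof -
    have "b \<in> WW" using that by auto
    then show ?thesis using that W_facts[of b] basic(13) S unfolding f_def by auto
  qed
  have s1: "(\<Sum>a\<in>V. f a * lazy_walk V E \<alpha> x a) = \<alpha> + (1-\<alpha>)/real d * (2 * real (card S))"
  proof -
    have "(\<Sum>a\<in>nbrs V E x. f a) = (\<Sum>a\<in>insert y UU. f a)" by (simp only: basic(7)[symmetric])
    also have "\<dots> = f y + (\<Sum>a\<in>UU. f a)" by (rule sum.insert[OF basic(16) basic(9)])
    also have "(\<Sum>a\<in>UU. f a) = (\<Sum>a\<in>UU. if a \<in> S then 2 else 0)"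
      by (rule sum.cong) (use fS fU in auto)
    also have "\<dots> = (\<Sum>a\<in>UU \<inter> S. 2)" by (rule sum.inter_restrict[OF basic(16), symmetric])
    also have "UU \<inter> S = S" using S by auto
    finally have "(\<Sum>a\<in>nbrs V E x. f a) = 2 * real (card S)" using fy by simp
    then show ?thesis by (simp add: sum_lazy[OF sg basic(1)] basic(4) fx)
  qed
  have s2: "(\<Sum>a\<in>V. f a * lazy_walk V E \<alpha> y a) = (1-\<alpha>)/real d * (1 + 2 * real (card T) - (real d - 1))"
  proof -
    have "(\<Sum>a\<in>nbrs V E y. f a) = (\<Sum>a\<in>insert x WW. f a)" by (simp only: basic(8)[symmetric])
    also have "\<dots> = f x + (\<Sum>a\<in>WW. f a)" by (rule sum.insert[OF basic(17) basic(10)])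
    also have "(\<Sum>a\<in>WW. f a) = (\<Sum>a\<in>WW. (if a \<in> T then 2 else 0) - 1)"
      by (rule sum.cong) (use fT fN in auto)
    also have "\<dots> = (\<Sum>a\<in>WW. if a \<in> T then 2 else 0) - real (card WW)" by (simp add: sum_subtractf)
    also have "(\<Sum>a\<in>WW. if a \<in> T then (2::real) else 0) = (\<Sum>a\<in>WW \<inter> T. 2)" by (rule sum.inter_restrict[OF basic(17), symmetric])
    also have "WW \<inter> T = T" using TW by auto
    finally have "(\<Sum>a\<in>nbrs V E y. f a) = 1 + 2 * real (card T) - (real d - 1)"
      using fx basic(19,6) by (simp add: of_nat_diff)
    then show ?thesis by (simp add: sum_lazy[OF sg basic(2)] basic(5) fy)
  qed
  have eps: "0 \<le> (1-\<alpha>)/real d" using assms(2) by simp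
  have "1 \<le> \<alpha> + (1-\<alpha>)/real d * (2 * real (card S)) - (1-\<alpha>)/real d * (1 + 2 * real (card T) - (real d - 1))"
  proof -
    have "(1-\<alpha>)/real d * real d \<le> (1-\<alpha>)/real d * (2 * real (card S) - (1 + 2 * real (card T) - (real d - 1)))"
      using cTS eps by (intro mult_left_mono) auto
    moreover have "(1-\<alpha>)/real d * real d = 1 - \<alpha>" using basic(6) by simp
    ultimately show ?thesis by (simp add: right_diff_distrib)
  qed
  also have "\<dots> = (\<Sum>a\<in>V. f a * lazy_walk V E \<alpha> x a) - (\<Sum>a\<in>V. f a * lazy_walk V E \<alpha> y a)"
    unfolding s1 s2 by simp
  also have "\<dots> \<le> transport V E (lazy_walk V E \<alpha> x) (lazy_walk V E \<alpha> y)"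
  proof (rule transport_ge[OF A0])
    fix A assume A: "coupling V (lazy_walk V E \<alpha> x) (lazy_walk V E \<alpha> y) A"
    show "(\<Sum>a\<in>V. f a * lazy_walk V E \<alpha> x a) - (\<Sum>a\<in>V. f a * lazy_walk V E \<alpha> y a) \<le> tcost V E A"
    proof (rule dual_bound[OF basic(20) A])
      fix a b assume ab: "a \<in> V" "b \<in> V" "lazy_walk V E \<alpha> x a \<noteq> 0" "lazy_walk V E \<alpha> y b \<noteq> 0"
      have a: "a = x \<or> a = y \<or> a \<in> S \<or> a \<in> UU - S" using supp_x[OF ab(3)] by blast
      have b: "b = x \<or> b = y \<or> b \<in> T \<or> b \<in> WW - T" using supp_y[OF ab(4)] by blast
      have g0: "0 \<le> real (gdist V E a b)" by simp
      have Uf: "a \<in> S \<Longrightarrow> a \<noteq> x" using U_facts S by blast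
      have Wf: "b \<in> WW \<Longrightarrow> b \<noteq> y" using W_facts by blast
      have UW: "a \<in> UU \<or> a \<in> S \<Longrightarrow> b \<in> WW \<or> b \<in> T \<Longrightarrow> a \<noteq> b" using basic(13) S TW by blast
      have nE: "a \<in> S \<Longrightarrow> b \<in> WW - T \<Longrightarrow> \<not> E a b" unfolding T_def by blast
      show "f a - f b \<le> real (gdist V E a b)"
        using a b
      proof (elim disjE)
        
        assume h: "a = x" "b = x"
        then show ?thesis using h fx fx  g0 S TW by (auto simp: basic(3))
        next
        assume h: "a = x" "b = y"
        then show ?thesis using h fx fy gdxy g0 S TW by (auto simp: basic(3))
        next
        assume h: "a = x" "b \<in> T"
        then show ?thesis using h fx fT[OF h(2)]  g0 S TW by (auto simp: basic(3))
        next
        assume h: "a = x" "b \<in> WW - T"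
        then show ?thesis using h fx fN[OF h(2)] gdxv[of b] g0 S TW by (auto simp: basic(3))
        next
        assume h: "a = y" "b = x"
        then show ?thesis using h fy fx  g0 S TW by (auto simp: basic(3))
        next
        assume h: "a = y" "b = y"
        then show ?thesis using h fy fy  g0 S TW by (auto simp: basic(3))
        next
        assume h: "a = y" "b \<in> T"
        then show ?thesis using h fy fT[OF h(2)]  g0 S TW by (auto simp: basic(3))
        next
        assume h: "a = y" "b \<in> WW - T"
        then show ?thesis using h fy fN[OF h(2)] gd1[OF basic(2) ab(2)] Wf g0 S TW by (auto simp: basic(3))
        next
        assume h: "a \<in> S" "b = x"
        then show ?thesis using h fS[OF h(1)] fx gd1[OF ab(1) basic(1)] Uf g0 S TW by (auto simp: basic(3))
        next
        assume h: "a \<in> S" "b = y"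
        then show ?thesis using h fS[OF h(1)] fy gduy[of a] g0 S TW by (auto simp: basic(3))
        next
        assume h: "a \<in> S" "b \<in> T"
        then show ?thesis using h fS[OF h(1)] fT[OF h(2)] gd1[OF ab(1,2)] UW g0 S TW by (auto simp: basic(3))
        next
        assume h: "a \<in> S" "b \<in> WW - T"
        then show ?thesis using h fS[OF h(1)] fN[OF h(2)] gduv[of a b] nE g0 S TW by (auto simp: basic(3))
        next
        assume h: "a \<in> UU - S" "b = x"
        then show ?thesis using h fU[OF h(1)] fx  g0 S TW by (auto simp: basic(3))
        next
        assume h: "a \<in> UU - S" "b = y"
        then show ?thesis using h fU[OF h(1)] fy  g0 S TW by (auto simp: basic(3))
        next
        assume h: "a \<in> UU - S" "b \<in> T"
        then show ?thesis using h fU[OF h(1)] fT[OF h(2)]  g0 S TW by (auto simp: basic(3))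
        next
        assume h: "a \<in> UU - S" "b \<in> WW - T"
        then show ?thesis using h fU[OF h(1)] fN[OF h(2)] gd1[OF ab(1,2)] UW g0 S TW by (auto simp: basic(3))
      qed
    qed
  qed
  finally show ?thesis .
qed

end


lemma sum_if_const: "(\<Sum>b\<in>V. (if P then g b else (0::real))) = (if P then (\<Sum>b\<in>V. g b) else 0)"
  by simp

lemma if_mult0: "(if P then u else 0) * (r::real) = (if P then u * r else 0)"
  by simp

context edge
begin

lemma upperC:
  assumes "1/2 \<le> \<alpha>" "\<alpha> \<le> 1" and inj: "inj_on \<sigma> UU" and sig: "\<forall>u\<in>UU. \<sigma> u \<in> WW \<and> E u (\<sigma> u)"
  shows "transport V E (lazy_walk V E \<alpha> x) (lazy_walk V E \<alpha> y) \<le> 1 - 2 * (1 - \<alpha>) / real d"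
proof -
  define \<epsilon> where "\<epsilon> = (1 - \<alpha>) / real d"
  have dpos: "1 \<le> real d" using basic(6) by simp
  have e0: "0 \<le> \<epsilon>" unfolding \<epsilon>_def using assms(2) by simp
  have e1: "\<epsilon> \<le> 1 - \<alpha>" unfolding \<epsilon>_def using assms(2) dpos by (simp add: divide_le_eq mult_le_cancel_left1)
  have e2: "\<epsilon> \<le> \<alpha>" "\<epsilon> \<le> 1" "\<alpha> - \<epsilon> \<le> 1" using e1 e0 assms(1,2) by auto
  have ad: "\<alpha> = 1 - \<epsilon> * real d" unfolding \<epsilon>_def using dpos by simp
  have img: "\<sigma> ` UU = WW"
  proof (rule card_subset_eq[OF basic(17)])
    show "\<sigma> ` UU \<subseteq> WW" using sig by auto
    show "card (\<sigma> ` UU) = card WW" using card_image[OF inj] basic(18,19) by simp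
  qed
  have sV: "\<And>a. a \<in> UU \<Longrightarrow> \<sigma> a \<in> V" using sig basic(15) by blast
  define A where "A = (\<lambda>a b. (if a = x then (if b = x then \<epsilon> else 0) else 0)
     + (if a = x then (if b = y then \<alpha> - \<epsilon> else 0) else 0)
     + (if a = y then (if b = y then \<epsilon> else 0) else 0)
     + (if a \<in> UU then (if b = \<sigma> a then \<epsilon> else 0) else 0))"
  have row: "(\<Sum>b\<in>V. A a b * h b) = (if a = x then \<epsilon> * h x + (\<alpha> - \<epsilon>) * h y else 0)
      + (if a = y then \<epsilon> * h y else 0) + (if a \<in> UU then \<epsilon> * h (\<sigma> a) else 0)" for a h
    unfolding A_def using basic(1,2,3,11,20) sV
    by (simp add: distrib_right sum.distrib if_mult0 sum_if_const sum.delta)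
  have col: "(\<Sum>a\<in>V. A a b) = (if b = x then \<epsilon> else 0) + (if b = y then \<alpha> - \<epsilon> else 0)
      + (if b = y then \<epsilon> else 0) + (if b \<in> WW then \<epsilon> else 0)" for b
  proof -
    have "(\<Sum>a\<in>V. (if a \<in> UU then (if b = \<sigma> a then \<epsilon> else 0) else 0)) = (\<Sum>a\<in>V \<inter> UU. (if b = \<sigma> a then \<epsilon> else 0))"
      by (rule sum.inter_restrict[OF basic(20), symmetric])
    also have "V \<inter> UU = UU" using basic(14) by auto
    also have "(\<Sum>a\<in>UU. (if b = \<sigma> a then \<epsilon> else 0)) = (\<Sum>w\<in>\<sigma> ` UU. (if b = w then \<epsilon> else 0))"
      by (simp add: sum.reindex[OF inj])
    also have "\<dots> = (if b \<in> WW then \<epsilon> else 0)" unfolding img using basic(17) by simp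
    finally have 4: "(\<Sum>a\<in>V. (if a \<in> UU then (if b = \<sigma> a then \<epsilon> else 0) else 0)) = (if b \<in> WW then \<epsilon> else 0)" .
    show ?thesis unfolding A_def using basic(1,2,20) 4
      by (simp add: sum.distrib sum.delta)
  qed
  have cpl: "coupling V (lazy_walk V E \<alpha> x) (lazy_walk V E \<alpha> y) A"
    unfolding coupling_def
  proof (intro conjI allI impI ballI)
    fix a b
    have ae: "0 \<le> \<alpha> - \<epsilon>" using e2 by simp
    show "0 \<le> A a b" unfolding A_def using e0 ae by (intro add_nonneg_nonneg) simp_all
    show "A a b \<le> 1"
    proof (cases "a = x")
      case True
      then have "a \<noteq> y" "a \<notin> UU" using basic(3,11) by auto
      then show ?thesis unfolding A_def using True e2 basic(3) by (cases "b = x") auto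
    next
      case ax: False
      show ?thesis
      proof (cases "a = y")
        case True
        then have "a \<notin> UU" using basic(9) by auto
        then show ?thesis unfolding A_def using True ax e2 by auto
      next
        case False
        then show ?thesis unfolding A_def using ax e2 by auto
      qed
    qed
    show "a \<notin> V \<or> b \<notin> V \<Longrightarrow> A a b = 0"
    proof -
      assume h: "a \<notin> V \<or> b \<notin> V"
      then show ?thesis
      proof
        assume "a \<notin> V"
        then have "a \<noteq> x" "a \<noteq> y" "a \<notin> UU" using basic(1,2,14) by auto
        then show ?thesis unfolding A_def by simp
      next
        assume "b \<notin> V"
        then have "b \<noteq> x" "b \<noteq> y" "a \<in> UU \<Longrightarrow> b \<noteq> \<sigma> a" using basic(1,2) sV by auto
        then show ?thesis unfolding A_def by simp
      qed
    qed
  next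
    fix a assume "a \<in> V"
    show "(\<Sum>b\<in>V. A a b) = lazy_walk V E \<alpha> x a"
      using row[of a "\<lambda>_. 1"] basic(3,4,7,9,11) unfolding lazy_walk_def \<epsilon>_def by auto
  next
    fix b assume "b \<in> V"
    show "(\<Sum>a\<in>V. A a b) = lazy_walk V E \<alpha> y b"
      using col[of b] basic(3,5,8,10,12) unfolding lazy_walk_def \<epsilon>_def by auto
  qed
  have "tcost V E A = (\<Sum>a\<in>V. (if a = x then \<epsilon> * real (gdist V E a x) + (\<alpha> - \<epsilon>) * real (gdist V E a y) else 0)
      + (if a = y then \<epsilon> * real (gdist V E a y) else 0) + (if a \<in> UU then \<epsilon> * real (gdist V E a (\<sigma> a)) else 0))"
    unfolding tcost_def using row by simp
  also have "\<dots> = (\<alpha> - \<epsilon>) + (\<Sum>a\<in>V. (if a \<in> UU then \<epsilon> else 0))"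
  proof -
    have "\<And>a. a \<in> UU \<Longrightarrow> gdist V E a (\<sigma> a) = 1" using sig gdist_edge[OF _ sg cg] by blast
    then have "(\<Sum>a\<in>V. (if a \<in> UU then \<epsilon> * real (gdist V E a (\<sigma> a)) else 0)) = (\<Sum>a\<in>V. (if a \<in> UU then \<epsilon> else 0))"
      by (intro sum.cong) auto
    then show ?thesis using basic(1,2,20) gdxy gdist_refl[of x V E] gdist_refl[of y V E] by (simp add: sum.distrib)
  qed
  also have "(\<Sum>a\<in>V. (if a \<in> UU then \<epsilon> else 0)) = \<epsilon> * (real d - 1)"
  proof -
    have "(\<Sum>a\<in>V. (if a \<in> UU then \<epsilon> else 0)) = (\<Sum>a\<in>V \<inter> UU. \<epsilon>)"
      by (rule sum.inter_restrict[OF basic(20), symmetric])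
    also have "V \<inter> UU = UU" using basic(14) by auto
    finally show ?thesis using basic(18,6) by (simp add: of_nat_diff)
  qed
  finally have tc: "tcost V E A = (\<alpha> - \<epsilon>) + \<epsilon> * (real d - 1)" .
  have "(\<alpha> - \<epsilon>) + \<epsilon> * (real d - 1) = 1 - 2 * \<epsilon>" using ad by (simp add: algebra_simps)
  moreover have "2 * (1 - \<alpha>) / real d = 2 * \<epsilon>" by (simp add: \<epsilon>_def)
  ultimately have "tcost V E A = 1 - 2 * (1 - \<alpha>) / real d" using tc by simp
  then show ?thesis using transport_le[OF cpl, where E=E] by linarith
qed

end


lemma if_mult0': "(if P then u else 0) * (r::real) = (if P then u * r else 0)"
  by simp

context edge
begin

lemma lw_comb:
  assumes "z \<in> V" and t: "t = (1 - \<beta>) / (1 - \<alpha>)" "\<alpha> < 1"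
  shows "lazy_walk V E \<beta> z a = t * lazy_walk V E \<alpha> z a + (1 - t) * (if a = z then 1 else 0)"
proof -
  have "1 - \<alpha> \<noteq> 0" using assms by simp
  then have e0: "t * (1 - \<alpha>) = 1 - \<beta>" unfolding t by simp
  then have e1: "t * \<alpha> + (1 - t) = \<beta>" by (simp add: algebra_simps)
  show ?thesis
  proof (cases "a = z")
    case True then show ?thesis unfolding lazy_walk_def using e1 by simp
  next
    case False then show ?thesis unfolding lazy_walk_def by (simp add: e0)
  qed
qed

lemma mono_step:
  assumes "0 \<le> \<alpha>" "\<alpha> < \<beta>" "\<beta> < 1"
  shows "(1 - transport V E (lazy_walk V E \<alpha> x) (lazy_walk V E \<alpha> y)) / (1 - \<alpha>)
      \<le> (1 - transport V E (lazy_walk V E \<beta> x) (lazy_walk V E \<beta> y)) / (1 - \<beta>)"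
proof -
  define Wa where "Wa = transport V E (lazy_walk V E \<alpha> x) (lazy_walk V E \<alpha> y)"
  define Wb where "Wb = transport V E (lazy_walk V E \<beta> x) (lazy_walk V E \<beta> y)"
  define t where "t = (1 - \<beta>) / (1 - \<alpha>)"
  have t0: "0 < t" "t < 1" unfolding t_def using assms by (auto simp: field_simps)
  obtain A0 where A0: "coupling V (lazy_walk V E \<alpha> x) (lazy_walk V E \<alpha> y) A0"
    using ex_coupling[of \<alpha>] assms by fastforce
  have key: "Wb \<le> t * tcost V E A + (1 - t)" if A: "coupling V (lazy_walk V E \<alpha> x) (lazy_walk V E \<alpha> y) A" for A
  proof -
    define A' where "A' = (\<lambda>a b. t * A a b + (1 - t) * (if a = x \<and> b = y then 1 else 0))"
    have Ab: "\<And>a b. 0 \<le> A a b" "\<And>a b. A a b \<le> 1" "\<And>a b. a \<notin> V \<or> b \<notin> V \<Longrightarrow> A a b = 0"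
      "\<And>a. a \<in> V \<Longrightarrow> (\<Sum>b\<in>V. A a b) = lazy_walk V E \<alpha> x a"
      "\<And>b. b \<in> V \<Longrightarrow> (\<Sum>a\<in>V. A a b) = lazy_walk V E \<alpha> y b"
      using A unfolding coupling_def by auto
    have cpl: "coupling V (lazy_walk V E \<beta> x) (lazy_walk V E \<beta> y) A'"
      unfolding coupling_def
    proof (intro conjI allI impI ballI)
      fix a b
      show "0 \<le> A' a b" unfolding A'_def using Ab(1)[of a b] t0 by auto
      have "t * A a b \<le> t" using Ab(2)[of a b] t0 by simp
      then show "A' a b \<le> 1" unfolding A'_def using t0 Ab(1,2)[of a b] by (auto intro: mult_le_one)
      show "a \<notin> V \<or> b \<notin> V \<Longrightarrow> A' a b = 0" unfolding A'_def using Ab(3)[of a b] basic(1,2) by auto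
    next
      fix a assume a: "a \<in> V"
      have "(\<Sum>b\<in>V. A' a b) = t * (\<Sum>b\<in>V. A a b) + (1 - t) * (\<Sum>b\<in>V. (if a = x \<and> b = y then 1 else 0))"
        unfolding A'_def by (simp add: sum.distrib sum_distrib_left)
      also have "(\<Sum>b\<in>V. (if a = x \<and> b = y then 1 else (0::real))) = (if a = x then 1 else 0)"
        using basic(2,20) by (cases "a = x") auto
      finally show "(\<Sum>b\<in>V. A' a b) = lazy_walk V E \<beta> x a"
        using Ab(4)[OF a] lw_comb[OF basic(1) t_def] assms by simp
    next
      fix b assume b: "b \<in> V"
      have "(\<Sum>a\<in>V. A' a b) = t * (\<Sum>a\<in>V. A a b) + (1 - t) * (\<Sum>a\<in>V. (if a = x \<and> b = y then 1 else 0))"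
        unfolding A'_def by (simp add: sum.distrib sum_distrib_left)
      also have "(\<Sum>a\<in>V. (if a = x \<and> b = y then 1 else (0::real))) = (if b = y then 1 else 0)"
        using basic(1,20) by (cases "b = y") auto
      finally show "(\<Sum>a\<in>V. A' a b) = lazy_walk V E \<beta> y b"
        using Ab(5)[OF b] lw_comb[OF basic(2) t_def] assms by simp
    qed
    have "tcost V E A' = t * tcost V E A + (1 - t) * (\<Sum>a\<in>V. \<Sum>b\<in>V. (if a = x \<and> b = y then 1 else 0) * real (gdist V E a b))"
      unfolding tcost_def A'_def by (simp add: distrib_right sum.distrib sum_distrib_left mult.assoc)
    also have "(\<Sum>a\<in>V. \<Sum>b\<in>V. (if a = x \<and> b = y then 1 else 0) * real (gdist V E a b)) = 1"
    proof -
      have "(\<Sum>a\<in>V. \<Sum>b\<in>V. (if a = x \<and> b = y then 1 else 0) * real (gdist V E a b))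
          = (\<Sum>a\<in>V. if a = x then real (gdist V E x y) else 0)"
      proof (rule sum.cong)
        fix a assume "a \<in> V"
        show "(\<Sum>b\<in>V. (if a = x \<and> b = y then 1 else 0) * real (gdist V E a b)) = (if a = x then real (gdist V E x y) else 0)"
          using basic(2,20) by (cases "a = x") (auto simp: if_mult0' sum.delta)
      qed simp
      also have "\<dots> = 1" using basic(1,20) gdxy by simp
      finally show ?thesis .
    qed
    finally have "tcost V E A' = t * tcost V E A + (1 - t)" by simp
    then show ?thesis using transport_le[OF cpl, where E=E] unfolding Wb_def by linarith
  qed
  have "(Wb - (1 - t)) / t \<le> Wa"
    unfolding Wa_def
  proof (rule transport_ge[OF A0])
    fix A assume "coupling V (lazy_walk V E \<alpha> x) (lazy_walk V E \<alpha> y) A"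
    from key[OF this] show "(Wb - (1 - t)) / t \<le> tcost V E A" using t0 by (simp add: divide_le_eq mult.commute)
  qed
  then have "Wb \<le> t * Wa + (1 - t)" using t0 by (simp add: divide_le_eq mult.commute)
  then have "t * (1 - Wa) \<le> 1 - Wb" by (simp add: algebra_simps)
  then have "t * (1 - Wa) / (1 - \<beta>) \<le> (1 - Wb) / (1 - \<beta>)" using assms by (simp add: divide_right_mono)
  moreover have "t * (1 - Wa) / (1 - \<beta>) = (1 - Wa) / (1 - \<alpha>)"
  proof -
    have "t / (1 - \<beta>) = 1 / (1 - \<alpha>)" unfolding t_def using assms by simp
    then show ?thesis by (metis times_divide_eq_right mult.commute divide_divide_eq_left times_divide_eq_left mult_1)
  qed
  ultimately show ?thesis unfolding Wa_def Wb_def by simp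
qed

end


lemma mono_lim:
  fixes g :: "real \<Rightarrow> real"
  assumes mono: "\<And>a b. 0 \<le> a \<Longrightarrow> a < b \<Longrightarrow> b < 1 \<Longrightarrow> g a \<le> g b"
    and bd: "\<And>a. 0 \<le> a \<Longrightarrow> a < 1 \<Longrightarrow> g a \<le> B"
  shows "(g \<longlongrightarrow> Sup (g ` {0..<1})) (at_left 1)" and "Sup (g ` {0..<1}) \<le> B"
proof -
  have ne: "g ` {0..<1} \<noteq> {}" by auto
  have bdd: "bdd_above (g ` {0..<1})" using bd by (intro bdd_aboveI[of _ B]) auto
  show "Sup (g ` {0..<1}) \<le> B" using bd ne by (intro cSup_least) auto
  show "(g \<longlongrightarrow> Sup (g ` {0..<1})) (at_left 1)"
  proof (rule order_tendstoI)
    fix a assume "a < Sup (g ` {0..<1})"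
    then obtain a0 where a0: "0 \<le> a0" "a0 < 1" "a < g a0" using less_cSup_iff[OF ne bdd] by auto
    have "eventually (\<lambda>t. t \<in> {a0<..<1}) (at_left (1::real))" using a0 by (intro eventually_at_left_real) 
    then show "eventually (\<lambda>t. a < g t) (at_left 1)"
      by eventually_elim (use a0 mono in \<open>force\<close>)
  next
    fix a assume a: "Sup (g ` {0..<1}) < a"
    have "eventually (\<lambda>t. t \<in> {0<..<1}) (at_left (1::real))" by (intro eventually_at_left_real) simp
    then show "eventually (\<lambda>t. g t < a) (at_left 1)"
    proof eventually_elim
      case (elim t)
      then have "g t \<le> Sup (g ` {0..<1})" using bdd by (intro cSup_upper) auto
      then show ?case using a by simp
    qed
  qed
qed


context edge
begin

lemma kappa_eq: "kappa_alpha V E \<alpha> x y = 1 - transport V E (lazy_walk V E \<alpha> x) (lazy_walk V E \<alpha> y)"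
  unfolding kappa_alpha_def gdxy by simp

lemma kappa_result:
  assumes pos: "kappa_LLY V E x y > 0"
  shows "kappa_LLY V E x y = 2 / real d"
proof -
  define g where "g = (\<lambda>\<alpha>. kappa_alpha V E \<alpha> x y / (1 - \<alpha>))"
  have kL: "kappa_LLY V E x y = Lim (at_left 1) g" unfolding kappa_LLY_def g_def ..
  define N where "N = (\<lambda>u. {v \<in> WW. E u v})"
  show ?thesis
  proof (cases "\<exists>\<sigma>. inj_on \<sigma> UU \<and> (\<forall>u\<in>UU. \<sigma> u \<in> N u)")
    case True
    then obtain \<sigma> where s: "inj_on \<sigma> UU" "\<forall>u\<in>UU. \<sigma> u \<in> WW \<and> E u (\<sigma> u)" unfolding N_def by auto
    have "eventually (\<lambda>t. t \<in> {1/2<..<1}) (at_left (1::real))" by (intro eventually_at_left_real) simp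
    then have "eventually (\<lambda>t. g t = 2 / real d) (at_left (1::real))"
    proof eventually_elim
      case (elim t)
      then have t: "1/2 \<le> t" "t \<le> 1" "t < 1" by auto
      have "transport V E (lazy_walk V E t x) (lazy_walk V E t y) = 1 - 2 * (1 - t) / real d"
        using lowerA[of t] upperC[OF t(1,2) s] t by simp
      moreover have "1 - t \<noteq> 0" "real d \<noteq> 0" using t basic(6) by auto
      ultimately show ?case unfolding g_def kappa_eq by (simp add: field_simps)
    qed
    then have "(g \<longlongrightarrow> 2 / real d) (at_left 1)" by (rule tendsto_eventually)
    then show ?thesis unfolding kL by (intro tendsto_Lim) simp_all
  next
    case False
    have "\<not> (\<forall>S. S \<subseteq> UU \<longrightarrow> card S \<le> card (\<Union>(N ` S)))"
    proof
      assume "\<forall>S. S \<subseteq> UU \<longrightarrow> card S \<le> card (\<Union>(N ` S))"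
      then have "\<exists>f. inj_on f UU \<and> (\<forall>u\<in>UU. f u \<in> N u)"
        by (intro hall) (use basic(17) basic(16) in \<open>auto simp: N_def\<close>)
      with False show False by blast
    qed
    then obtain S where S: "S \<subseteq> UU" "card (\<Union>(N ` S)) < card S" by (auto simp: not_le)
    have eqN: "\<Union>(N ` S) = {v \<in> WW. \<exists>u\<in>S. E u v}" unfolding N_def by auto
    have gle: "g t \<le> 0" if "0 \<le> t" "t < 1" for t
    proof -
      have "1 \<le> transport V E (lazy_walk V E t x) (lazy_walk V E t y)"
        using lowerB[OF that(1) _ S(1)] S(2) that unfolding eqN by simp
      then show ?thesis unfolding g_def kappa_eq using that by (simp add: divide_nonpos_pos)
    qed
    have gm: "g a \<le> g b" if "0 \<le> a" "a < b" "b < 1" for a b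
      using mono_step[OF that] unfolding g_def kappa_eq .
    have "(g \<longlongrightarrow> Sup (g ` {0..<1})) (at_left 1)" "Sup (g ` {0..<1}) \<le> 0"
      using mono_lim[of g 0] gm gle by auto
    then have "kappa_LLY V E x y \<le> 0" unfolding kL using tendsto_Lim[of "at_left (1::real)"] by force
    with pos show ?thesis by simp
  qed
qed

end

theorem proposition2p4:
  fixes V :: "'a set" and E :: "'a \<Rightarrow> 'a \<Rightarrow> bool" and d :: nat
  assumes "simple_graph V E"
    and "connected_graph V E"
    and "regular V E d"
    and "\<not> has_cycle V E 3"
    and "\<not> has_cycle V E 5"
    and "\<forall>x y. E x y \<longrightarrow> kappa_LLY V E x y > 0"
  shows "\<forall>x y. E x y \<longrightarrow> kappa_LLY V E x y = 2 / real d"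
proof (intro allI impI)
  fix x y assume xy: "E x y"
  interpret edge V E d x y using assms xy by unfold_locales
  show "kappa_LLY V E x y = 2 / real d" using kappa_result assms(6) xy by blast
qed


end
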